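(* Let $S$ be a finite set of size $n$ and let $\mathcal{X}_{\mathrm{Ab}}=\{*:S\times S\to S\mid (S,* )\text{ is an abelian group}\}$. Then there exists a query-algorithm with respect to $\mathcal{X}_{\mathrm{Ab}}$ which solves product-recovering and uses at most $n$ queries for every $*\in\mathcal{X}_{\mathrm{Ab}}$ (i.e. every leaf has depth at most $n$).
   Context: Let $S$ be a finite set and $\mathcal{X}$ a set of binary operations $*:S\times S\to S$. A query-algorithm with respect to $\mathcal{X}$ is a rooted tree $T$ in which every non-leaf node $v$ is labeled by a pair $(x_v,y_v)\in S^2$ (the query "$x_v*y_v$"), leaves are unlabeled, and every edge from $v$ to a child is labeled by an element of $S$ (a possible answer), distinct edges leaving the same node having distinct labels. It is required that for every $*\in\mathcal{X}$ there is a path $(v_0,\dots,v_k)$ from the root $v_0$ to a leaf $v_k$ such that for each $0\le i<k$ the edge $(v_i,v_{i+1})$ is labeled $x_{v_i}*y_{v_i}$. This leaf is uniquely determined and is denoted $L( * )$, giving a map $L:\mathcal{X}\to\{\text{leaves of }T\}$. The query-algorithm solves product-recovering if $L$ is a bijection. The number of queries used on $*$ is the depth of $L( * )$. *)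

theory Defs
  imports "HOL-Algebra.Group"
begin

text \<open>A non-leaf node carries a query (x,y) and a partial map from answers
  (elements of 'a) to children; distinct edges out of a node thus carry
  distinct labels automatically.\<close>
datatype 'a qtree = Leaf | Query 'a 'a "'a \<Rightarrow> 'a qtree option"

text \<open>Leaves are identified with their addresses: the list of edge labels
  on the path from the root.  The depth of a leaf is the length of its address.\<close>
inductive is_leaf :: "'a qtree \<Rightarrow> 'a list \<Rightarrow> bool" where
  leaf: "is_leaf Leaf []"
| step: "ch a = Some t \<Longrightarrow> is_leaf t p \<Longrightarrow> is_leaf (Query x y ch) (a # p)"

inductive reaches :: "('a \<Rightarrow> 'a \<Rightarrow> 'a) \<Rightarrow> 'a qtree \<Rightarrow> 'a list \<Rightarrow> bool" where
  leaf: "reaches op Leaf []"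
| step: "ch (op x y) = Some t \<Longrightarrow> reaches op t p \<Longrightarrow> reaches op (Query x y ch) (op x y # p)"

definition leaf_of :: "'a qtree \<Rightarrow> ('a \<Rightarrow> 'a \<Rightarrow> 'a) \<Rightarrow> 'a list" where
  "leaf_of T op = (THE p. reaches op T p)"

definition is_query_algorithm :: "('a \<Rightarrow> 'a \<Rightarrow> 'a) set \<Rightarrow> 'a qtree \<Rightarrow> bool" where
  "is_query_algorithm X T \<longleftrightarrow> (\<forall>op\<in>X. \<exists>p. reaches op T p)"

definition solves_product_recovering :: "('a \<Rightarrow> 'a \<Rightarrow> 'a) set \<Rightarrow> 'a qtree \<Rightarrow> bool" where
  "solves_product_recovering X T \<longleftrightarrow>
     is_query_algorithm X T \<and> bij_betw (leaf_of T) X {p. is_leaf T p}"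

definition abelian_ops :: "('a \<Rightarrow> 'a \<Rightarrow> 'a) set" where
  "abelian_ops = {op. \<exists>e. comm_group \<lparr>carrier = UNIV, mult = op, one = e\<rparr>}"

end

theory Submission
  imports Defs
begin


definition AG :: "('a \<Rightarrow> 'a \<Rightarrow> 'a) \<Rightarrow> 'a \<Rightarrow> bool" where
 "AG op e \<longleftrightarrow> (\<forall>x y z. op (op x y) z = op x (op y z)) \<and> (\<forall>x y. op x y = op y x)
   \<and> (\<forall>x. op e x = x) \<and> (\<forall>x. \<exists>y. op x y = e)"

lemma abelian_AG: assumes "op \<in> abelian_ops" shows "\<exists>e. AG op e"
proof -
  from assms obtain e where G: "comm_group \<lparr>carrier = UNIV, mult = op, one = e\<rparr>"
    unfolding abelian_ops_def by auto
  interpret comm_group "\<lparr>carrier = UNIV, mult = op, one = e\<rparr>" by (rule G)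
  have "AG op e" unfolding AG_def
  proof (intro conjI allI)
    fix x y z show "op (op x y) z = op x (op y z)" using m_assoc[of x y z] by simp
  next
    fix x y show "op x y = op y x" using m_comm[of x y] by simp
  next
    fix x show "op e x = x" using l_one[of x] by simp
  next
    fix x show "\<exists>y. op x y = e" using r_inv[of x] by auto
  qed
  then show ?thesis by blast
qed

lemma abelian_nonempty: "abelian_ops \<noteq> ({} :: ('a::finite \<Rightarrow> 'a \<Rightarrow> 'a) set)"
proof -
  define n where "n = card (UNIV :: 'a set)"
  have n0: "n > 0" unfolding n_def by (simp add: card_gt_0_iff)
  obtain h :: "nat \<Rightarrow> 'a" where h: "bij_betw h {0..<n} UNIV"
    using ex_bij_betw_nat_finite[of "UNIV :: 'a set"] unfolding n_def by auto
  define h' where "h' = inv_into {0..<n} h"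
  have hh': "h (h' x) = x" for x unfolding h'_def using h
    by (meson UNIV_I bij_betw_inv_into_right)
  have h'h: "m < n \<Longrightarrow> h' (h m) = m" for m unfolding h'_def using h
    by (simp add: bij_betw_inv_into_left)
  have h'lt: "h' x < n" for x unfolding h'_def using h
    by (metis UNIV_I atLeastLessThan_iff bij_betw_def inv_into_into)
  define op where "op x y = h ((h' x + h' y) mod n)" for x y
  have "comm_group \<lparr>carrier = UNIV, mult = op, one = h 0\<rparr>"
  proof (rule comm_groupI, simp_all)
    fix x y z
    show "op (op x y) z = op x (op y z)" unfolding op_def using n0
      by (simp add: h'h mod_add_left_eq mod_add_right_eq add.assoc)
  next
    fix x y show "op x y = op y x" unfolding op_def by (simp add: add.commute)
  next
    fix x show "op (h 0) x = x" unfolding op_def using n0 h'lt[of x]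
      by (simp add: h'h hh')
  next
    fix x show "\<exists>y. op y x = h 0" unfolding op_def
      apply (rule exI[of _ "h ((n - h' x) mod n)"])
      using n0 h'lt[of x]
      by (simp add: h'h mod_add_left_eq)
  qed
  then show ?thesis unfolding abelian_ops_def by auto
qed

context fixes op :: "'a \<Rightarrow> 'a \<Rightarrow> 'a" and e assumes G: "AG op e" begin
lemma ag_assoc: "op (op x y) z = op x (op y z)" using G unfolding AG_def by blast
lemma ag_comm: "op x y = op y x" using G unfolding AG_def by blast
lemma ag_lid: "op e x = x" using G unfolding AG_def by blast
lemma ag_rid: "op x e = x" using ag_lid ag_comm by metis
lemma ag_inv: "\<exists>y. op x y = e" using G unfolding AG_def by blast
lemma ag_cancel: assumes "op x y = op x y'" shows "y = y'"
proof -
  obtain u where u: "op u x = e" using ag_inv[of x] ag_comm by metis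
  have "op u (op x y) = op u (op x y')" using assms by simp
  then show ?thesis by (simp add: ag_assoc[symmetric] u ag_lid)
qed
end

fun pw :: "('a\<Rightarrow>'a\<Rightarrow>'a) \<Rightarrow> 'a \<Rightarrow> 'a \<Rightarrow> nat \<Rightarrow> 'a" where
 "pw op e x 0 = e" | "pw op e x (Suc j) = op x (pw op e x j)"

lemma pw_add: assumes "AG op e" shows "pw op e g (i + j) = op (pw op e g i) (pw op e g j)"
  by (induction i) (simp_all add: ag_lid[OF assms] ag_assoc[OF assms])

lemma pw_one: assumes "AG op e" shows "pw op e g (Suc 0) = g"
  by (simp add: ag_rid[OF assms])




datatype 'a st = P1 "'a list" | P2 "'a list" "'a list" 'a | Done

definition newphase :: "'a list \<Rightarrow> 'a st" where
 "newphase K = (if set K = UNIV then Done else P2 K (K @ [SOME x. x \<notin> set K]) (SOME x. x \<notin> set K))"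

fun stp :: "'a st \<Rightarrow> 'a \<Rightarrow> 'a st" where
 "stp (P1 S) z = (if z \<in> set S then newphase (last S # butlast S) else P1 (S @ [z]))"
| "stp (P2 K S g) z = (if z \<in> set S then newphase S else P2 K (S @ [z]) g)"
| "stp Done z = Done"

fun qry :: "'a st \<Rightarrow> 'a \<times> 'a" where
 "qry (P1 S) = (hd S, last S)"
| "qry (P2 K S g) = (g, S ! (length S - length K))"
| "qry Done = (undefined, undefined)"

fun run :: "('a\<Rightarrow>'a\<Rightarrow>'a) \<Rightarrow> nat \<Rightarrow> 'a st \<Rightarrow> 'a list" where
 "run op 0 s = []"
| "run op (Suc f) s = (let z = op (fst (qry s)) (snd (qry s)) in z # run op f (stp s z))"

fun build :: "nat \<Rightarrow> 'a st \<Rightarrow> ('a\<Rightarrow>'a\<Rightarrow>'a) set \<Rightarrow> 'a qtree" where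
 "build 0 s C = Leaf"
| "build (Suc f) s C = Query (fst (qry s)) (snd (qry s))
     (\<lambda>z. if \<exists>op\<in>C. op (fst (qry s)) (snd (qry s)) = z
          then Some (build f (stp s z) {op\<in>C. op (fst (qry s)) (snd (qry s)) = z}) else None)"

lemma build_reaches: "op \<in> C \<Longrightarrow> reaches op (build f s C) (run op f s)"
proof (induction f arbitrary: s C)
  case 0 then show ?case by (simp add: reaches.leaf)
next
  case (Suc f)
  obtain x y where q: "qry s = (x, y)" by force
  have "reaches op (build f (stp s (op x y)) {op'\<in>C. op' x y = op x y}) (run op f (stp s (op x y)))"
    using Suc by auto
  then show ?case using Suc.prems q
    by (auto simp: Let_def intro!: reaches.step)
qed

lemma reaches_det: "reaches op T p \<Longrightarrow> reaches op T q \<Longrightarrow> p = q"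
proof (induction arbitrary: q rule: reaches.induct)
  case (leaf op) then show ?case by (cases rule: reaches.cases) auto
next
  case (step ch op x y t p)
  from step.prems show ?case by (cases rule: reaches.cases) (use step in auto)
qed

lemma reaches_leaf: "reaches op T p \<Longrightarrow> is_leaf T p"
  by (induction rule: reaches.induct) (auto intro: is_leaf.intros)

lemma build_leaf: "is_leaf (build f s C) p \<Longrightarrow> C \<noteq> {} \<Longrightarrow> \<exists>op\<in>C. p = run op f s"
proof (induction f arbitrary: s C p)
  case 0 then show ?case by (auto elim: is_leaf.cases)
next
  case (Suc f)
  obtain x y where q: "qry s = (x, y)" by force
  have L: "is_leaf (Query x y (\<lambda>z. if \<exists>op\<in>C. op x y = z then Some (build f (stp s z) {op\<in>C. op x y = z}) else None)) p"
    using Suc.prems(1) unfolding build.simps q fst_conv snd_conv .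
  from L obtain a p' t where p: "p = a # p'"
    and ch: "(if \<exists>op\<in>C. op x y = a then Some (build f (stp s a) {op\<in>C. op x y = a}) else None) = Some t"
    and lt: "is_leaf t p'"
    by (auto elim: is_leaf.cases)
  from ch have ex: "\<exists>op\<in>C. op x y = a" and t: "t = build f (stp s a) {op\<in>C. op x y = a}"
    by (auto split: if_splits)
  from Suc.IH[of "stp s a" "{op\<in>C. op x y = a}" p'] lt t ex
  obtain op where "op \<in> C" "op x y = a" "p' = run op f (stp s a)" by auto
  then show ?case using p q by (auto simp: Let_def)
qed

lemma run_length: "length (run op f s) = f"
  by (induction f arbitrary: s) (auto simp: Let_def)




definition Sub where
 "Sub op1 e1 op2 e2 K \<longleftrightarrow> K \<noteq> [] \<and> K!0 = e1 \<and> e1 = e2 \<and> distinct K \<and>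
   (\<forall>x\<in>set K. \<forall>y\<in>set K. op1 x y \<in> set K \<and> op1 x y = op2 x y)"

definition Rep where
 "Rep op1 e1 op2 e2 K S g \<longleftrightarrow> (\<forall>i<length S.
    S!i = op1 (pw op1 e1 g (i div length K)) (K!(i mod length K)) \<and>
    S!i = op2 (pw op2 e2 g (i div length K)) (K!(i mod length K)))"

lemma ag_rearr: assumes "AG op e" shows "op (op a k) (op b k') = op (op a b) (op k k')"
  by (metis ag_assoc[OF assms] ag_comm[OF assms])

lemma close_lemma:
  assumes G1: "AG op1 e1" and G2: "AG op2 e2"
    and sub: "Sub op1 e1 op2 e2 K" and kl: "length K \<le> length S" and dS: "distinct S"
    and rep: "Rep op1 e1 op2 e2 K S g"
    and hz: "op1 (pw op1 e1 g (length S div length K)) (K ! (length S mod length K)) \<in> set S"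
    and hz2: "op1 (pw op1 e1 g (length S div length K)) (K ! (length S mod length K))
            = op2 (pw op2 e2 g (length S div length K)) (K ! (length S mod length K))"
  shows "Sub op1 e1 op2 e2 S"
proof -
  define k where "k = length K"
  define m where "m = length S div k"
  define r where "r = length S mod k"
  define p1 where "p1 = pw op1 e1 g"
  define p2 where "p2 = pw op2 e2 g"
  have Kne: "K \<noteq> []" and K0: "K!0 = e1" and e12: "e1 = e2" and dK: "distinct K"
    and Kcl: "\<And>x y. x \<in> set K \<Longrightarrow> y \<in> set K \<Longrightarrow> op1 x y \<in> set K"
    and Kag: "\<And>x y. x \<in> set K \<Longrightarrow> y \<in> set K \<Longrightarrow> op1 x y = op2 x y"
    using sub unfolding Sub_def by blast+
  have kpos: "k > 0" using Kne k_def by simp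
  have Sdec: "length S = m * k + r" unfolding m_def r_def by simp
  have rk: "r < k" unfolding r_def using kpos by simp
  have m1: "m \<ge> 1" unfolding m_def using kl kpos k_def
    by (simp add: Suc_le_eq div_greater_zero_iff)
  have repi: "\<And>i. i < length S \<Longrightarrow> S!i = op1 (p1 (i div k)) (K!(i mod k)) \<and> S!i = op2 (p2 (i div k)) (K!(i mod k))"
    using rep unfolding Rep_def p1_def p2_def k_def by blast
  have e1K: "e1 \<in> set K" using K0 Kne by (metis length_greater_0_conv nth_mem)
  have inv: "\<exists>k'\<in>set K. op1 x k' = e1" if xK: "x \<in> set K" for x
  proof -
    have "inj_on (op1 x) (set K)" by (meson ag_cancel[OF G1] inj_onI)
    moreover have "op1 x ` set K \<subseteq> set K" using Kcl xK by auto
    ultimately have "op1 x ` set K = set K" by (simp add: endo_inj_surj)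
    then show ?thesis using e1K by (metis imageE)
  qed
  from hz obtain idx where idx: "idx < length S" "S!idx = op1 (p1 m) (K!r)"
    unfolding p1_def m_def r_def k_def by (metis in_set_conv_nth)
  define i where "i = idx div k"
  define s where "s = idx mod k"
  have sk: "s < k" unfolding s_def using kpos by simp
  have idxd: "idx = i * k + s" unfolding i_def s_def by simp
  have eq: "op1 (p1 m) (K!r) = op1 (p1 i) (K!s)" using repi[OF idx(1)] idx(2) i_def s_def by simp
  have im: "i \<le> m"
  proof (rule ccontr)
    assume "\<not> i \<le> m" then have "m+1 \<le> i" by simp
    then have "(m+1) * k \<le> i * k" by (rule mult_le_mono1)
    then show False using idx(1) Sdec idxd rk by simp
  qed
  have ilt: "i < m"
  proof (rule ccontr)
    assume "\<not> i < m" with im have im': "i = m" by simp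
    then have "s < r" using idx(1) Sdec idxd by simp
    moreover have "K!r = K!s" using eq im' ag_cancel[OF G1] by metis
    ultimately show False using dK rk sk k_def by (simp add: nth_eq_iff_index_eq)
  qed
  define d where "d = m - i"
  have d1: "d \<ge> 1" and md: "m = i + d" using ilt d_def by auto
  have "op1 (p1 i) (op1 (p1 d) (K!r)) = op1 (p1 i) (K!s)"
    using eq md pw_add[OF G1] ag_assoc[OF G1] unfolding p1_def by metis
  then have dr: "op1 (p1 d) (K!r) = K!s" using ag_cancel[OF G1] by metis
  have Kr: "K!r \<in> set K" using rk k_def by simp
  have Ks: "K!s \<in> set K" using sk k_def by simp
  obtain k' where k': "k' \<in> set K" "op1 (K!r) k' = e1" using inv[OF Kr] by blast
  have "p1 d = op1 (p1 d) (op1 (K!r) k')" using k'(2) ag_rid[OF G1] by simp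
  also have "\<dots> = op1 (K!s) k'" using dr ag_assoc[OF G1] by metis
  finally have pdK: "p1 d \<in> set K" using Kcl[OF Ks k'(1)] by simp
  then obtain u where u: "u < k" "K!u = p1 d" using k_def by (metis in_set_conv_nth)
  have "\<not> d * k < length S"
  proof
    assume a: "d * k < length S"
    have "S!(d*k) = op1 (p1 d) (K!0)" using repi[OF a] kpos by simp
    then have s1: "S!(d*k) = p1 d" using K0 ag_rid[OF G1] by simp
    have ul: "u < length S" using u kl k_def by simp
    have "S!u = op1 (p1 0) (K!u)" using repi[OF ul] u by simp
    then have s2: "S!u = p1 d" using u ag_lid[OF G1] p1_def by simp
    have "u < d * k" using u d1 by (metis less_le_trans mult_1 mult_le_mono1)
    moreover have "d * k = u" using nth_eq_iff_index_eq[OF dS a ul] s1 s2 by simp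
    ultimately show False by simp
  qed
  then have A1: "m * k + r \<le> d * k" using Sdec by simp
  have A2: "d * k \<le> m * k" using md by (simp add: mult_le_mono1)
  from A1 A2 have r0: "r = 0" and dmk: "d * k = m * k" by linarith+
  then have dm: "d = m" using kpos by simp
  have pmK: "p1 m \<in> set K" using pdK dm by simp
  have p12m: "p1 m = p2 m" using hz2 r0 K0 e12 ag_rid[OF G1] ag_rid[OF G2]
    unfolding p1_def p2_def m_def r_def k_def by metis
  have P: "\<forall>x\<in>set K. op1 (p1 J) x \<in> set S \<and> op1 (p1 J) x = op2 (p2 J) x" for J
  proof (induction J rule: less_induct)
    case (less J)
    show ?case
    proof (cases "J < m")
      case True
      show ?thesis
      proof
        fix x assume "x \<in> set K"
        then obtain t where t: "t < k" "K!t = x" using k_def by (metis in_set_conv_nth)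
        have lt: "J * k + t < length S"
        proof -
          have "J * k + t < (J+1) * k" using t by simp
          also have "\<dots> \<le> m * k" using True by (intro mult_le_mono1) simp
          finally show ?thesis using Sdec by simp
        qed
        have dv: "(J * k + t) div k = J" "(J * k + t) mod k = t" using t by auto
        from repi[OF lt] dv t show "op1 (p1 J) x \<in> set S \<and> op1 (p1 J) x = op2 (p2 J) x"
          by (metis lt nth_mem)
      qed
    next
      case False
      then have Jd: "J = (J - m) + m" by simp
      have lt: "J - m < J" using m1 False by simp
      show ?thesis
      proof
        fix x assume xK: "x \<in> set K"
        have k2K: "op1 (p1 m) x \<in> set K" using Kcl[OF pmK xK] .
        have k2e: "op1 (p1 m) x = op2 (p2 m) x" using Kag[OF pmK xK] p12m by simp
        have a1: "op1 (p1 J) x = op1 (p1 (J - m)) (op1 (p1 m) x)"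
          using Jd pw_add[OF G1] ag_assoc[OF G1] unfolding p1_def by metis
        have a2: "op2 (p2 J) x = op2 (p2 (J - m)) (op2 (p2 m) x)"
          using Jd pw_add[OF G2] ag_assoc[OF G2] unfolding p2_def by metis
        show "op1 (p1 J) x \<in> set S \<and> op1 (p1 J) x = op2 (p2 J) x"
          using less.IH[OF lt] k2K k2e a1 a2 by metis
      qed
    qed
  qed
  have elem: "\<exists>j. \<exists>y\<in>set K. x = op1 (p1 j) y \<and> x = op2 (p2 j) y" if xS: "x \<in> set S" for x
  proof -
    obtain t where t: "t < length S" "S!t = x" using xS by (auto simp: in_set_conv_nth)
    have "K!(t mod k) \<in> set K" using kpos k_def by simp
    then show ?thesis using repi[OF t(1)] t(2)
      by (intro exI[of _ "t div k"] bexI[of _ "K!(t mod k)"]) auto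
  qed
  have cl: "op1 x y \<in> set S \<and> op1 x y = op2 x y" if xS: "x \<in> set S" and yS: "y \<in> set S" for x y
  proof -
    obtain j a where a: "a \<in> set K" "x = op1 (p1 j) a" "x = op2 (p2 j) a" using elem[OF xS] by blast
    obtain j' b where b: "b \<in> set K" "y = op1 (p1 j') b" "y = op2 (p2 j') b" using elem[OF yS] by blast
    have "op1 x y = op1 (op1 (p1 j) (p1 j')) (op1 a b)"
      using a(2) b(2) ag_rearr[OF G1] by simp
    also have "\<dots> = op1 (p1 (j + j')) (op1 a b)" unfolding p1_def pw_add[OF G1] ..
    moreover have "op2 x y = op2 (op2 (p2 j) (p2 j')) (op2 a b)"
      using a(3) b(3) ag_rearr[OF G2] by simp
    moreover have "\<dots> = op2 (p2 (j + j')) (op2 a b)" unfolding p2_def pw_add[OF G2] ..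
    moreover have "op1 a b \<in> set K" "op1 a b = op2 a b" using Kcl Kag a b by auto
    ultimately show ?thesis using P[of "j + j'"] by auto
  qed
  have Sne: "S \<noteq> []" using kl kpos k_def by auto
  have "S!0 = op1 (p1 0) (K!0)" using repi[of 0] Sne kpos by simp
  then have S0: "S!0 = e1" using K0 ag_lid[OF G1] p1_def by simp
  show ?thesis unfolding Sub_def using Sne S0 e12 dS cl by blast
qed




fun Inv where
 "Inv op1 e1 op2 e2 t Done = (op1 = op2)"
| "Inv op1 e1 op2 e2 t (P1 S) = (length S = Suc t \<and> distinct S \<and>
     (\<forall>i<length S. S!i = pw op1 e1 (hd S) (Suc i) \<and> S!i = pw op2 e2 (hd S) (Suc i)))"
| "Inv op1 e1 op2 e2 t (P2 K S g) = (length S = Suc t \<and> distinct S \<and> Sub op1 e1 op2 e2 K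
     \<and> length K < length S \<and> Rep op1 e1 op2 e2 K S g)"

lemma inv_newphase:
  assumes G1: "AG op1 e1" and G2: "AG op2 e2" and sub: "Sub op1 e1 op2 e2 K" and len: "length K = t"
  shows "Inv op1 e1 op2 e2 t (newphase K)"
proof (cases "set K = UNIV")
  case True
  have "op1 x y = op2 x y" for x y using sub True unfolding Sub_def by blast
  then show ?thesis using True unfolding newphase_def by auto
next
  case False
  define g where "g = (SOME x. x \<notin> set K)"
  have gK: "g \<notin> set K" unfolding g_def using False by (metis (mono_tags) UNIV_eq_I someI_ex)
  have Kne: "K \<noteq> []" and K0: "K!0 = e1" and e12: "e1 = e2" and dK: "distinct K"
    using sub unfolding Sub_def by blast+
  have kpos: "length K > 0" using Kne by simp
  have "Rep op1 e1 op2 e2 K (K @ [g]) g" unfolding Rep_def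
  proof (intro allI impI)
    fix i assume "i < length (K @ [g])"
    then consider "i < length K" | "i = length K" by fastforce
    then show "(K @ [g]) ! i = op1 (pw op1 e1 g (i div length K)) (K ! (i mod length K)) \<and>
               (K @ [g]) ! i = op2 (pw op2 e2 g (i div length K)) (K ! (i mod length K))"
    proof cases
      case 1 then show ?thesis by (simp add: nth_append ag_lid[OF G1] ag_lid[OF G2])
    next
      case 2
      have a: "(K @ [g]) ! i = g" using 2 by simp
      have b: "i div length K = Suc 0" "i mod length K = 0" using 2 kpos by auto
      have c1: "op1 (pw op1 e1 g (Suc 0)) (K!0) = g" using K0 pw_one[OF G1] ag_rid[OF G1] by simp
      have c2: "op2 (pw op2 e2 g (Suc 0)) (K!0) = g" using K0 e12 pw_one[OF G2] ag_rid[OF G2] by simp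
      show ?thesis unfolding a b using c1 c2 by simp
    qed
  qed
  then show ?thesis using False unfolding newphase_def g_def[symmetric]
    using len dK gK sub by simp
qed

lemma inv_step:
  assumes G1: "AG op1 e1" and G2: "AG op2 e2" and I: "Inv op1 e1 op2 e2 t s"
    and z1: "op1 (fst (qry s)) (snd (qry s)) = z" and z2: "op2 (fst (qry s)) (snd (qry s)) = z"
  shows "Inv op1 e1 op2 e2 (Suc t) (stp s z)"
proof (cases s)
  case Done then show ?thesis using I by simp
next
  case (P1 S)
  define a where "a = hd S"
  have lS: "length S = Suc t" and dS: "distinct S"
    and rS: "\<And>i. i < length S \<Longrightarrow> S!i = pw op1 e1 a (Suc i) \<and> S!i = pw op2 e2 a (Suc i)"
    using I P1 a_def by auto
  have Sne: "S \<noteq> []" using lS by auto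
  have lastS: "last S = S ! (length S - 1)" using Sne by (simp add: last_conv_nth)
  have last1: "last S = pw op1 e1 a (length S)" and last2: "last S = pw op2 e2 a (length S)"
    using rS[of "length S - 1"] lastS lS by auto
  have z1': "z = pw op1 e1 a (Suc (length S))" using z1 P1 last1 a_def by simp
  have z2': "z = pw op2 e2 a (Suc (length S))" using z2 P1 last2 a_def by simp
  show ?thesis
  proof (cases "z \<in> set S")
    case False
    have hd': "hd (S @ [z]) = a" using Sne a_def by simp
    have "\<forall>i<length (S @ [z]). (S @ [z])!i = pw op1 e1 a (Suc i) \<and> (S @ [z])!i = pw op2 e2 a (Suc i)"
    proof (intro allI impI)
      fix i assume "i < length (S @ [z])"
      then consider "i < length S" | "i = length S" by fastforce
      then show "(S @ [z])!i = pw op1 e1 a (Suc i) \<and> (S @ [z])!i = pw op2 e2 a (Suc i)"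
      proof cases
        case 1
        have "(S @ [z])!i = S!i" using 1 by (simp add: nth_append)
        then show ?thesis using rS[OF 1] by metis
      next
        case 2 then show ?thesis using z1' z2' by (simp only: nth_append_length)
      qed
    qed
    then have "Inv op1 e1 op2 e2 (Suc t) (P1 (S @ [z]))"
    proof -
      have len: "length (S @ [z]) = Suc (Suc t)" using lS by simp
      have d: "distinct (S @ [z])" using dS False by simp
      show ?thesis unfolding Inv.simps hd' using len d \<open>\<forall>i<length (S @ [z]). _\<close> by blast
    qed
    moreover have "stp s z = P1 (S @ [z])" using P1 False by simp
    ultimately show ?thesis by (simp only:)
  next
    case True
    then obtain i where i: "i < length S" "S!i = z" by (metis in_set_conv_nth)
    have hS: "S!0 = a" using rS[of 0] Sne pw_one[OF G1] by simp
    have eq: "op1 (pw op1 e1 a (Suc i)) (pw op1 e1 a (length S - i)) = op1 (pw op1 e1 a (Suc i)) e1"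
    proof -
      have "pw op1 e1 a (Suc (length S)) = pw op1 e1 a (Suc i + (length S - i))" using i by simp
      then show ?thesis using pw_add[OF G1, of a "Suc i" "length S - i"] ag_rid[OF G1] z1' i rS
        by metis
    qed
    then have pe: "pw op1 e1 a (length S - i) = e1" by (rule ag_cancel[OF G1])
    have i0: "i = 0"
    proof (rule ccontr)
      assume "i \<noteq> 0"
      define j where "j = length S - i"
      have j: "j \<ge> 1" "j < length S" using i \<open>i \<noteq> 0\<close> j_def by auto
      have "S!j = pw op1 e1 a (Suc j)" using rS j by blast
      also have "\<dots> = op1 a e1" using pe j_def by simp
      also have "\<dots> = S!0" using hS ag_rid[OF G1] by simp
      finally have "j = 0" using nth_eq_iff_index_eq[OF dS] j Sne by auto
      then show False using j by simp
    qed
    have pe1: "pw op1 e1 a (length S) = e1" using pe i0 by simp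
    have za: "z = a" using i i0 hS by simp
    have "op2 a (pw op2 e2 a (length S)) = op2 a e2" using z2' za ag_rid[OF G2] by simp
    then have pe2: "pw op2 e2 a (length S) = e2" by (rule ag_cancel[OF G2])
    have e12: "e1 = e2" using pe1 pe2 last1 last2 by simp
    define K' where "K' = last S # butlast S"
    have lK': "length K' = length S" unfolding K'_def using Sne by simp
    have Sd: "S = butlast S @ [last S]" using Sne by simp
    have dd: "distinct (butlast S @ [last S])" using dS Sd by simp
    have dK': "distinct K'" unfolding K'_def using dd by auto
    have sub0: "Sub op1 e1 op2 e2 [e1]" unfolding Sub_def using e12 ag_lid[OF G1] ag_lid[OF G2] by simp
    have rep: "Rep op1 e1 op2 e2 [e1] K' a" unfolding Rep_def
    proof (intro allI impI)
      fix i assume il: "i < length K'"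
      have KK: "K'!i = pw op1 e1 a i \<and> K'!i = pw op2 e2 a i"
      proof (cases i)
        case 0 then show ?thesis using pe1 pe2 e12 last1 unfolding K'_def by simp
      next
        case (Suc i')
        then have "i' < length S" "i' < length (butlast S)" using il lK' by auto
        then have "K'!i = S!i'" using Suc unfolding K'_def by (simp add: nth_butlast)
        then show ?thesis using rS[of i'] Suc \<open>i' < length S\<close> by metis
      qed
      have h: "i div length [e1] = i" "i mod length [e1] = 0" "[e1]!0 = e1" by simp_all
      have h2: "op2 (pw op2 e2 a i) e1 = pw op2 e2 a i" using e12 ag_rid[OF G2] by simp
      show "K' ! i = op1 (pw op1 e1 a (i div length [e1])) ([e1] ! (i mod length [e1])) \<and>
                 K' ! i = op2 (pw op2 e2 a (i div length [e1])) ([e1] ! (i mod length [e1]))"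
        unfolding h ag_rid[OF G1] h2 using KK .
    qed
    have e1K: "e1 \<in> set K'" unfolding K'_def using pe1 last1 by simp
    have subK: "Sub op1 e1 op2 e2 K'"
      apply (rule close_lemma[OF G1 G2 sub0 _ dK' rep])
      using lK' lS Sne e1K pe1 pe2 e12 ag_rid[OF G1] ag_rid[OF G2] by simp_all
    have "Inv op1 e1 op2 e2 (Suc t) (newphase K')"
      by (rule inv_newphase[OF G1 G2 subK]) (use lK' lS in simp)
    moreover have "stp s z = newphase K'" using P1 True K'_def by simp
    ultimately show ?thesis by (simp only:)
  qed
next
  case (P2 K S g)
  have lS: "length S = Suc t" and dS: "distinct S" and sub: "Sub op1 e1 op2 e2 K"
    and kS: "length K < length S" and rep: "Rep op1 e1 op2 e2 K S g"
    using I P2 by auto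
  define kl where "kl = length K"
  have kpos: "kl > 0" using sub unfolding Sub_def kl_def by simp
  define p where "p = length S - kl"
  have pl: "p < length S" unfolding p_def using kpos kS kl_def by (intro diff_less) auto
  have dv: "p div kl = length S div kl - 1" "p mod kl = length S mod kl"
    "length S div kl \<ge> 1"
    using le_div_geq[OF kpos, of "length S"] le_mod_geq[of kl "length S"] kS kl_def p_def
    by auto
  have repp: "S!p = op1 (pw op1 e1 g (p div kl)) (K!(p mod kl)) \<and> S!p = op2 (pw op2 e2 g (p div kl)) (K!(p mod kl))"
    using rep pl unfolding Rep_def kl_def by blast
  have zf1: "z = op1 (pw op1 e1 g (length S div kl)) (K ! (length S mod kl))"
  proof -
    have "z = op1 g (S!p)" using z1 P2 p_def kl_def by simp
    also have "\<dots> = op1 g (op1 (pw op1 e1 g (p div kl)) (K!(p mod kl)))"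
      by (simp only: conjunct1[OF repp])
    also have "\<dots> = op1 (pw op1 e1 g (Suc (p div kl))) (K!(p mod kl))"
      by (simp add: ag_assoc[OF G1])
    finally show ?thesis using dv by simp
  qed
  have zf2: "z = op2 (pw op2 e2 g (length S div kl)) (K ! (length S mod kl))"
  proof -
    have "z = op2 g (S!p)" using z2 P2 p_def kl_def by simp
    also have "\<dots> = op2 g (op2 (pw op2 e2 g (p div kl)) (K!(p mod kl)))"
      by (simp only: conjunct2[OF repp])
    also have "\<dots> = op2 (pw op2 e2 g (Suc (p div kl))) (K!(p mod kl))"
      by (simp add: ag_assoc[OF G2])
    finally show ?thesis using dv by simp
  qed
  show ?thesis
  proof (cases "z \<in> set S")
    case False
    have "Rep op1 e1 op2 e2 K (S @ [z]) g" using rep zf1 zf2 unfolding Rep_def kl_def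
      by (auto simp: nth_append less_Suc_eq)
    then have "Inv op1 e1 op2 e2 (Suc t) (P2 K (S @ [z]) g)"
      using lS dS False sub kS by simp
    moreover have "stp s z = P2 K (S @ [z]) g" using P2 False by simp
    ultimately show ?thesis by (simp only:)
  next
    case True
    have subS: "Sub op1 e1 op2 e2 S"
      apply (rule close_lemma[OF G1 G2 sub _ dS rep])
      using kS True zf1 zf2 kl_def by simp_all
    have "Inv op1 e1 op2 e2 (Suc t) (newphase S)"
      by (rule inv_newphase[OF G1 G2 subS]) (use lS in simp)
    moreover have "stp s z = newphase S" using P2 True by simp
    ultimately show ?thesis by (simp only:)
  qed
qed

lemma inv_final:
  fixes op1 op2 :: "'a::finite \<Rightarrow> 'a \<Rightarrow> 'a"
  assumes G1: "AG op1 e1" and G2: "AG op2 e2"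
  shows "Inv op1 e1 op2 e2 t s \<Longrightarrow> run op1 f s = run op2 f s \<Longrightarrow> card (UNIV :: 'a set) \<le> t + f
    \<Longrightarrow> op1 = op2"
proof (induction f arbitrary: t s)
  case 0
  have bnd: "length S \<le> card (UNIV :: 'a set)" if "distinct S" for S :: "'a list"
    using that by (metis card_mono distinct_card finite subset_UNIV)
  show ?case
  proof (cases s)
    case Done then show ?thesis using 0 by simp
  next
    case (P1 S) then show ?thesis using 0 bnd[of S] by simp
  next
    case (P2 K S g) then show ?thesis using 0 bnd[of S] by simp
  qed
next
  case (Suc f)
  define z where "z = op1 (fst (qry s)) (snd (qry s))"
  have z2: "op2 (fst (qry s)) (snd (qry s)) = z" and tl: "run op1 f (stp s z) = run op2 f (stp s z)"
    using Suc.prems(2) unfolding z_def by (auto simp: Let_def)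
  have "Inv op1 e1 op2 e2 (Suc t) (stp s z)"
    using inv_step[OF G1 G2 Suc.prems(1)] z_def z2 by blast
  then show ?case using Suc.IH tl Suc.prems(3) by simp
qed




theorem mainTheorem5:
  fixes n :: nat and X :: "('a::finite \<Rightarrow> 'a \<Rightarrow> 'a) set"
  assumes "card (UNIV :: 'a set) = n"
    and "X = abelian_ops"
  shows "\<exists>T :: 'a qtree. solves_product_recovering X T
           \<and> (\<forall>op\<in>X. length (leaf_of T op) \<le> n)"
proof -
  define st0 :: "'a st" where "st0 = P1 [undefined]"
  define T where "T = build n st0 X"
  have reach: "reaches op T (run op n st0)" if "op \<in> X" for op
    unfolding T_def using that by (rule build_reaches)
  have lo: "leaf_of T op = run op n st0" if "op \<in> X" for op
    unfolding leaf_of_def using reach[OF that] reaches_det by blast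
  have inj: "inj_on (leaf_of T) X"
  proof (rule inj_onI)
    fix op1 op2 assume o1: "op1 \<in> X" and o2: "op2 \<in> X" and eq: "leaf_of T op1 = leaf_of T op2"
    obtain e1 where G1: "AG op1 e1" using abelian_AG o1 assms(2) by blast
    obtain e2 where G2: "AG op2 e2" using abelian_AG o2 assms(2) by blast
    have r: "run op1 n st0 = run op2 n st0" using eq lo o1 o2 by simp
    have I: "Inv op1 e1 op2 e2 0 st0" unfolding st0_def
      using ag_rid[OF G1] ag_rid[OF G2] by simp
    show "op1 = op2" using inv_final[OF G1 G2 I r] assms(1) by simp
  qed
  have img: "leaf_of T ` X = {p. is_leaf T p}"
  proof
    show "leaf_of T ` X \<subseteq> {p. is_leaf T p}"
    proof
      fix p assume "p \<in> leaf_of T ` X"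
      then obtain op where "op \<in> X" "p = leaf_of T op" by blast
      then have "is_leaf T p" using lo reach reaches_leaf by metis
      then show "p \<in> {p. is_leaf T p}" by simp
    qed
  next
    show "{p. is_leaf T p} \<subseteq> leaf_of T ` X"
    proof
      fix p assume "p \<in> {p. is_leaf T p}"
      then have "is_leaf (build n st0 X) p" unfolding T_def by simp
      moreover have "X \<noteq> {}" using assms(2) abelian_nonempty by simp
      ultimately obtain op where "op \<in> X" "p = run op n st0" using build_leaf by blast
      then show "p \<in> leaf_of T ` X" using lo by auto
    qed
  qed
  have "solves_product_recovering X T"
    unfolding solves_product_recovering_def is_query_algorithm_def bij_betw_def
    using reach inj img by blast
  moreover have "\<forall>op\<in>X. length (leaf_of T op) \<le> n" using lo run_length by (metis order_refl)
  ultimately show ?thesis by blast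
qed


end
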